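(* Let $X\in\mathbb{R}^{n\times p}$ have rows $X_1^\top,\dots,X_n^\top$, let $R>0$, $I=[-R,R]$, and let $\beta\in\mathbb{R}^p$ satisfy $X_i^\top\beta\in I$ for all $i$. Let $\xi_1,\dots,\xi_n,\epsilon_1,\dots,\epsilon_n$ be independent random variables with mean $0$, where $\xi_1,\dots,\xi_n$ are identically distributed and $|\xi_i|<r$ for some $r>0$. Let $R_0>R+r$ and let $f$ be a function that is continuous on $\Delta_0=\{z\in\mathbb{C}:|z|\le R_0\}$, analytic in its interior, and real-valued on $[-R_0,R_0]$. Let $\Delta=\{z\in\mathbb{C}:|z|<R_0-r\}$, $g(z)=\mathrm{E}[f(z+\xi_1)]$ for $z\in\Delta$, and $\delta_i=f(X_i^\top\beta+\xi_i)-g(X_i^\top\beta)+\epsilon_i$, $\delta=(\delta_1,\dots,\delta_n)^\top$, $\epsilon=(\epsilon_1,\dots,\epsilon_n)^\top$. Then: (1) $g$ is analytic on $\Delta$ and $\mathsf{d}(g,I)\ge\mathsf{d}(f,[-R_0,R_0])$. (2) If there are $\sigma>0$ and $c_\epsilon>0$ such that $\Pr\{|a^\top\epsilon|>t\|a\|_2\}\le c_\epsilon e^{-t^2/(2\sigma^2)}$ for all $t\ge0$ and $a\in\mathbb{R}^n$, then there are $\sigma'>0$ and $c'_\epsilon>0$ such that $\Pr\{|a^\top\delta|>t\|a\|_2\}\le c'_\epsilon e^{-t^2/(2\sigma'^2)}$ for all $t\ge0$ and $a\in\mathbb{R}^n$. Moreover, if the $\epsilon_i$ are bounded, then there is $\sigma'>0$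 such that this holds with $c'_\epsilon=2$.
   Context: For a real-valued function $h$ defined on an interval $J\subset\mathbb{R}$, $\mathsf{d}(h,J)=\inf\{|h(x)-h(y)|/|x-y|: x,y\in J,\ x\neq y\}$. *)

theory Defs
  imports "HOL-Probability.Probability"
begin

definition dcoef :: "(real \<Rightarrow> real) \<Rightarrow> real set \<Rightarrow> real" where
  "dcoef h J = Inf {\<bar>h x - h y\<bar> / \<bar>x - y\<bar> | x y. x \<in> J \<and> y \<in> J \<and> x \<noteq> y}"

end

theory Submission imports Defs "HOL-Complex_Analysis.Complex_Analysis" begin

lemma g_holo:
  fixes M :: "'a measure" and \<xi> :: "'a \<Rightarrow> real" and f :: "complex \<Rightarrow> complex"
  assumes M: "prob_space M" and xm: "\<xi> \<in> borel_measurable M"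
    and xb: "\<And>\<omega>. \<omega> \<in> space M \<Longrightarrow> \<bar>\<xi> \<omega>\<bar> < r"
    and fc: "continuous_on (cball 0 R0) f" and fh: "f holomorphic_on ball 0 R0"
  shows "(\<lambda>z. integral\<^sup>L M (\<lambda>\<omega>. f (z + complex_of_real (\<xi> \<omega>)))) holomorphic_on ball 0 (R0 - r)"
proof -
  interpret prob_space M by fact
  define g where "g = (\<lambda>z. integral\<^sup>L M (\<lambda>\<omega>. f (z + complex_of_real (\<xi> \<omega>))))"
  define F where "F = (\<lambda>w. if w \<in> cball 0 R0 then f w else 0)"
  have Fm: "F \<in> borel_measurable borel" unfolding F_def
    by (rule borel_measurable_continuous_on_if) (auto intro: fc continuous_on_const)
  define D where "D = (\<lambda>w. if w \<in> ball 0 R0 then deriv f w else 0)"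
  have hd: "deriv f holomorphic_on ball 0 R0" using fh by (simp add: holomorphic_deriv)
  have Dm: "D \<in> borel_measurable borel" unfolding D_def
    by (rule borel_measurable_continuous_on_if) (auto intro: holomorphic_on_imp_continuous_on[OF hd] continuous_on_const)
  have fder: "\<And>w. w \<in> ball 0 R0 \<Longrightarrow> (f has_field_derivative deriv f w) (at w)"
    using fh by (metis holomorphic_derivI open_ball)
  note [measurable] = Fm Dm xm
  have measF: "(\<lambda>\<omega>. F (z + complex_of_real (\<xi> \<omega>))) \<in> borel_measurable M" for z
    by measurable
  have measD: "(\<lambda>\<omega>. D (z + complex_of_real (\<xi> \<omega>))) \<in> borel_measurable M" for z
    by measurable
  show ?thesis unfolding holomorphic_on_def g_def[symmetric]
  proof
    fix z0 :: complex assume z0: "z0 \<in> ball 0 (R0 - r)"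
    define d where "d = (R0 - r - norm z0)/2"
    have d: "d > 0" using z0 by (simp add: d_def dist_norm)
    define \<rho> where "\<rho> = norm z0 + d + r"
    have nz0: "norm z0 < R0 - r" using z0 by (simp add: dist_norm)
    have \<rho>: "\<rho> < R0" using nz0 unfolding \<rho>_def d_def by (simp add: field_simps)
    have cs: "cball 0 \<rho> \<subseteq> ball 0 R0" using \<rho> by auto
    have "compact (deriv f ` cball 0 \<rho>)"
      by (rule compact_continuous_image[OF continuous_on_subset[OF holomorphic_on_imp_continuous_on[OF hd] cs]]) simp
    then obtain K where K: "\<And>w. w \<in> cball 0 \<rho> \<Longrightarrow> norm (deriv f w) \<le> K"
      by (meson compact_imp_bounded bounded_iff imageI)
    have lip: "norm (f a - f b) \<le> K * norm (a - b)" if "a \<in> cball 0 \<rho>" "b \<in> cball 0 \<rho>" for a b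
      by (rule field_differentiable_bound[where f'="deriv f" and B=K, OF convex_cball _ _ that])
         (meson K has_field_derivative_at_within fder cs subsetD)+
    have inb: "z + complex_of_real (\<xi> \<omega>) \<in> cball 0 \<rho>" if "norm (z - z0) \<le> d" "\<omega> \<in> space M" for z \<omega>
    proof -
      have "norm (z + complex_of_real (\<xi> \<omega>)) \<le> norm z + \<bar>\<xi> \<omega>\<bar>" by (metis norm_of_real norm_triangle_ineq)
      also have "norm z \<le> norm z0 + d" using that(1) norm_triangle_ineq2[of z z0] by linarith
      finally show ?thesis using xb[OF that(2)] by (simp add: \<rho>_def)
    qed
    have eqF: "f (z + complex_of_real (\<xi> \<omega>)) = F (z + complex_of_real (\<xi> \<omega>))"
      if "norm (z - z0) \<le> d" "\<omega> \<in> space M" for z \<omega>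
      using inb[OF that] \<rho> unfolding F_def by auto
    have eqF0: "f (z0 + complex_of_real (\<xi> \<omega>)) = F (z0 + complex_of_real (\<xi> \<omega>))"
      if "\<omega> \<in> space M" for \<omega> using eqF[of z0 \<omega>] d that by simp
    have eqD: "deriv f (z0 + complex_of_real (\<xi> \<omega>)) = D (z0 + complex_of_real (\<xi> \<omega>))"
      if "\<omega> \<in> space M" for \<omega>
      using inb[OF _ that, of z0] \<rho> d unfolding D_def by auto
    define G where "G = integral\<^sup>L M (\<lambda>\<omega>. deriv f (z0 + complex_of_real (\<xi> \<omega>)))"
    have "((\<lambda>z. (g z - g z0) / (z - z0)) \<longlongrightarrow> G) (at z0)"
      unfolding tendsto_at_iff_sequentially
    proof (intro allI impI)
      fix X assume Xne: "\<forall>i. X i \<in> UNIV - {z0}" and Xl: "X \<longlonglongrightarrow> z0"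
      from Xl d obtain N where N: "\<And>i. i \<ge> N \<Longrightarrow> norm (X i - z0) < d"
        unfolding LIMSEQ_iff by blast
      define Y where "Y i = X (i + N)" for i
      have Yd: "norm (Y i - z0) \<le> d" for i using N[of "i+N"] by (simp add: Y_def)
      have Yne: "Y i \<noteq> z0" for i using Xne by (simp add: Y_def)
      have Yl: "Y \<longlonglongrightarrow> z0" unfolding Y_def by (rule LIMSEQ_ignore_initial_segment[OF Xl])
      have conv: "(\<lambda>i. integral\<^sup>L M (\<lambda>\<omega>. (f (Y i + complex_of_real (\<xi> \<omega>)) - f (z0 + complex_of_real (\<xi> \<omega>))) / (Y i - z0)))
              \<longlonglongrightarrow> G" unfolding G_def
      proof (rule integral_dominated_convergence[where w="\<lambda>_. K"])
        show "(\<lambda>\<omega>. deriv f (z0 + complex_of_real (\<xi> \<omega>))) \<in> borel_measurable M"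
          using measD by (rule measurable_cong[THEN iffD2, rotated]) (simp add: eqD)
        show "(\<lambda>\<omega>. (f (Y i + complex_of_real (\<xi> \<omega>)) - f (z0 + complex_of_real (\<xi> \<omega>))) / (Y i - z0)) \<in> borel_measurable M" for i
        proof -
          have "(\<lambda>\<omega>. (F (Y i + complex_of_real (\<xi> \<omega>)) - F (z0 + complex_of_real (\<xi> \<omega>))) / (Y i - z0)) \<in> borel_measurable M"
            by measurable
          then show ?thesis
            by (rule measurable_cong[THEN iffD1, rotated]) (simp add: eqF[OF Yd] eqF0)
        qed
        show "integrable M (\<lambda>_. K)" by simp
        show "AE \<omega> in M. (\<lambda>i. (f (Y i + complex_of_real (\<xi> \<omega>)) - f (z0 + complex_of_real (\<xi> \<omega>))) / (Y i - z0))
               \<longlonglongrightarrow> deriv f (z0 + complex_of_real (\<xi> \<omega>))"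
        proof (rule AE_I2)
          fix \<omega> assume \<omega>: "\<omega> \<in> space M"
          let ?c = "z0 + complex_of_real (\<xi> \<omega>)"
          have "(f has_field_derivative deriv f ?c) (at ?c)"
            using fder inb[OF _ \<omega>, of z0] \<rho> d by auto
          then have lim: "((\<lambda>w. (f w - f ?c) / (w - ?c)) \<longlongrightarrow> deriv f ?c) (at ?c)"
            by (simp add: has_field_derivative_iff)
          have Yc: "(\<lambda>i. Y i + complex_of_real (\<xi> \<omega>)) \<longlonglongrightarrow> ?c" by (intro tendsto_intros Yl)
          have Yn: "Y i + complex_of_real (\<xi> \<omega>) \<in> UNIV - {?c}" for i using Yne by auto
          have L: "\<forall>X. (\<forall>i. X i \<in> UNIV - {?c}) \<longrightarrow> X \<longlonglongrightarrow> ?c \<longrightarrow> ((\<lambda>w. (f w - f ?c) / (w - ?c)) \<circ> X) \<longlonglongrightarrow> deriv f ?c"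
            using lim unfolding tendsto_at_iff_sequentially .
          have "((\<lambda>w. (f w - f ?c) / (w - ?c)) \<circ> (\<lambda>i. Y i + complex_of_real (\<xi> \<omega>))) \<longlonglongrightarrow> deriv f ?c"
            using L[rule_format, OF Yn Yc] .
          then show "(\<lambda>i. (f (Y i + complex_of_real (\<xi> \<omega>)) - f ?c) / (Y i - z0)) \<longlonglongrightarrow> deriv f ?c"
            by (simp add: o_def)
        qed
        show "AE \<omega> in M. norm ((f (Y i + complex_of_real (\<xi> \<omega>)) - f (z0 + complex_of_real (\<xi> \<omega>))) / (Y i - z0)) \<le> K" for i
        proof (rule AE_I2)
          fix \<omega> assume \<omega>: "\<omega> \<in> space M"
          have "norm (f (Y i + complex_of_real (\<xi> \<omega>)) - f (z0 + complex_of_real (\<xi> \<omega>))) \<le> K * norm (Y i - z0)"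
            using lip[OF inb[OF Yd \<omega>] inb[OF _ \<omega>, of z0]] d by simp
          then show "norm ((f (Y i + complex_of_real (\<xi> \<omega>)) - f (z0 + complex_of_real (\<xi> \<omega>))) / (Y i - z0)) \<le> K"
            using Yne[of i] by (simp add: norm_divide divide_le_eq)
        qed
      qed
      obtain B0 where B0: "\<And>w. w \<in> cball 0 R0 \<Longrightarrow> norm (f w) \<le> B0"
        using compact_imp_bounded[OF compact_continuous_image[OF fc compact_cball]]
        by (meson bounded_iff imageI)
      have intf: "integrable M (\<lambda>\<omega>. f (z + complex_of_real (\<xi> \<omega>)))" if "norm (z - z0) \<le> d" for z
      proof (rule integrable_const_bound[where B=B0])
        show "AE \<omega> in M. norm (f (z + complex_of_real (\<xi> \<omega>))) \<le> B0"
        proof (intro AE_I2 B0)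
          fix \<omega> assume "\<omega> \<in> space M"
          then have "norm (z + complex_of_real (\<xi> \<omega>)) \<le> \<rho>" using inb[OF that] by simp
          then show "z + complex_of_real (\<xi> \<omega>) \<in> cball 0 R0" using \<rho> by simp
        qed
        show "(\<lambda>\<omega>. f (z + complex_of_real (\<xi> \<omega>))) \<in> borel_measurable M"
          using measF by (rule measurable_cong[THEN iffD2, rotated]) (simp add: eqF[OF that])
      qed
      have eqI: "integral\<^sup>L M (\<lambda>\<omega>. (f (Y i + complex_of_real (\<xi> \<omega>)) - f (z0 + complex_of_real (\<xi> \<omega>))) / (Y i - z0))
            = (g (Y i) - g z0) / (Y i - z0)" for i
        unfolding g_def using intf[OF Yd[of i]] intf[of z0] d
        by (simp add: integral_diff)
      have lY: "(\<lambda>i. (g (Y i) - g z0) / (Y i - z0)) \<longlonglongrightarrow> G" using conv unfolding eqI .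
      show "((\<lambda>z. (g z - g z0) / (z - z0)) \<circ> X) \<longlonglongrightarrow> G"
        by (rule LIMSEQ_offset[where k=N]) (use lY in \<open>simp add: Y_def o_def\<close>)
    qed
    then have "(g has_field_derivative G) (at z0)" by (simp add: has_field_derivative_iff)
    then show "g field_differentiable at z0 within ball 0 (R0 - r)"
      using field_differentiable_def has_field_derivative_at_within by blast
  qed
qed


lemma int_shift:
  fixes M :: "'a measure" and \<xi> :: "'a \<Rightarrow> real" and f :: "complex \<Rightarrow> complex"
  assumes M: "prob_space M" and xm: "\<xi> \<in> borel_measurable M"
    and xb: "\<And>\<omega>. \<omega> \<in> space M \<Longrightarrow> \<bar>\<xi> \<omega>\<bar> < r"
    and fc: "continuous_on (cball 0 R0) f" and z: "norm z + r \<le> R0"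
  shows "integrable M (\<lambda>\<omega>. f (z + complex_of_real (\<xi> \<omega>)))"
proof -
  interpret prob_space M by fact
  define F where "F = (\<lambda>w. if w \<in> cball 0 R0 then f w else 0)"
  have Fm: "F \<in> borel_measurable borel" unfolding F_def
    by (rule borel_measurable_continuous_on_if) (auto intro: fc continuous_on_const)
  note [measurable] = Fm xm
  have inb: "z + complex_of_real (\<xi> \<omega>) \<in> cball 0 R0" if "\<omega> \<in> space M" for \<omega>
  proof -
    have "norm (z + complex_of_real (\<xi> \<omega>)) \<le> norm z + \<bar>\<xi> \<omega>\<bar>" by (metis norm_of_real norm_triangle_ineq)
    then show ?thesis using xb[OF that] z by simp
  qed
  obtain B0 where B0: "\<And>w. w \<in> cball 0 R0 \<Longrightarrow> norm (f w) \<le> B0"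
    using compact_imp_bounded[OF compact_continuous_image[OF fc compact_cball]]
    by (meson bounded_iff imageI)
  show ?thesis
  proof (rule integrable_const_bound[where B=B0])
    show "AE \<omega> in M. norm (f (z + complex_of_real (\<xi> \<omega>))) \<le> B0"
      using inb by (intro AE_I2 B0) auto
    have "(\<lambda>\<omega>. F (z + complex_of_real (\<xi> \<omega>))) \<in> borel_measurable M" by measurable
    then show "(\<lambda>\<omega>. f (z + complex_of_real (\<xi> \<omega>))) \<in> borel_measurable M"
      by (rule measurable_cong[THEN iffD1, rotated]) (simp add: F_def inb[simplified])
  qed
qed

lemma dcoef_part:
  fixes M :: "'a measure" and \<xi> :: "'a \<Rightarrow> real" and f :: "complex \<Rightarrow> complex"
  assumes M: "prob_space M" and xm: "\<xi> \<in> borel_measurable M"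
    and xb: "\<And>\<omega>. \<omega> \<in> space M \<Longrightarrow> \<bar>\<xi> \<omega>\<bar> < r"
    and fc: "continuous_on (cball 0 R0) f" and R: "0 < R" and R0: "R0 > R + r"
  shows "dcoef (\<lambda>x. Re (integral\<^sup>L M (\<lambda>\<omega>. f (complex_of_real x + complex_of_real (\<xi> \<omega>))))) {-R..R}
       \<ge> dcoef (\<lambda>x. Re (f (complex_of_real x))) {-R0..R0}"
proof -
  interpret prob_space M by fact
  define \<phi> where "\<phi> = (\<lambda>x. Re (f (complex_of_real x)))"
  define G where "G = (\<lambda>x. Re (integral\<^sup>L M (\<lambda>\<omega>. f (complex_of_real x + complex_of_real (\<xi> \<omega>)))))"
  define D where "D = dcoef \<phi> {-R0..R0}"
  have r: "r > 0" using xb[of "SOME \<omega>. \<omega> \<in> space M"] not_empty some_in_eq by fastforce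
  have phic: "continuous_on {-R0..R0} \<phi>" unfolding \<phi>_def
    by (intro continuous_intros continuous_on_compose2[OF fc]) (auto simp: abs_le_iff)
  have key: "D * (y - x) \<le> \<bar>G y - G x\<bar>" if xy: "-R \<le> x" "x < y" "y \<le> R" "0 < D" for x y
  proof -
    have low: "D \<le> \<bar>\<phi> u - \<phi> v\<bar> / \<bar>u - v\<bar>" if "u \<in> {-R0..R0}" "v \<in> {-R0..R0}" "u \<noteq> v" for u v
      unfolding D_def dcoef_def
      by (rule cInf_lower) (use that in \<open>auto intro!: bdd_belowI[where m=0]\<close>)
    have low': "D * \<bar>u - v\<bar> \<le> \<bar>\<phi> u - \<phi> v\<bar>" if "u \<in> {-R0..R0}" "v \<in> {-R0..R0}" "u \<noteq> v" for u v
      using low[OF that] that(3) by (simp add: field_simps)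
    define \<psi> where "\<psi> = (\<lambda>s. \<phi> (y + s) - \<phi> (x + s))"
    have inJ: "x + s \<in> {-R0..R0}" "y + s \<in> {-R0..R0}" if "\<bar>s\<bar> \<le> r" for s
      using that xy R0 by auto
    have psib: "D * (y - x) \<le> \<bar>\<psi> s\<bar>" if "\<bar>s\<bar> \<le> r" for s
      using low'[OF inJ(2)[OF that] inJ(1)[OF that]] xy by (simp add: \<psi>_def)
    have psic: "continuous_on {-r..r} \<psi>" unfolding \<psi>_def
      by (intro continuous_intros continuous_on_compose2[OF phic]) (use xy R0 in auto)
    have sign: "(\<forall>\<omega>\<in>space M. \<psi> (\<xi> \<omega>) > 0) \<or> (\<forall>\<omega>\<in>space M. \<psi> (\<xi> \<omega>) < 0)"
    proof (rule ccontr)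
      assume "\<not> ?thesis"
      then obtain \<omega>1 \<omega>2 where w: "\<omega>1 \<in> space M" "\<omega>2 \<in> space M" "\<psi> (\<xi> \<omega>1) \<le> 0" "\<psi> (\<xi> \<omega>2) \<ge> 0"
        by (auto simp: not_less)
      have ne: "\<psi> s \<noteq> 0" if "\<bar>s\<bar> \<le> r" for s
        using psib[OF that] xy by (smt (verit) mult_pos_pos)
      have bs: "\<bar>\<xi> \<omega>1\<bar> \<le> r" "\<bar>\<xi> \<omega>2\<bar> \<le> r" using xb w(1,2) by (auto simp: less_imp_le)
      show False
      proof (cases "\<xi> \<omega>1 \<le> \<xi> \<omega>2")
        case True
        have "continuous_on {\<xi> \<omega>1..\<xi> \<omega>2} \<psi>" by (rule continuous_on_subset[OF psic]) (use bs in auto)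
        from IVT'[of \<psi>, OF w(3) w(4) True this] obtain s where "\<xi> \<omega>1 \<le> s" "s \<le> \<xi> \<omega>2" "\<psi> s = 0" by blast
        then show False using ne[of s] bs by auto
      next
        case False
        have "continuous_on {\<xi> \<omega>2..\<xi> \<omega>1} (\<lambda>s. - \<psi> s)"
          by (intro continuous_intros continuous_on_subset[OF psic]) (use bs in auto)
        moreover have "- \<psi> (\<xi> \<omega>2) \<le> 0" "0 \<le> - \<psi> (\<xi> \<omega>1)" "\<xi> \<omega>2 \<le> \<xi> \<omega>1" using w False by auto
        ultimately obtain s where "\<xi> \<omega>2 \<le> s" "s \<le> \<xi> \<omega>1" "- \<psi> s = 0"
          using IVT'[where y=0 and f="\<lambda>s. - \<psi> s"] by blast
        then show False using ne[of s] bs by auto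
      qed
    qed
    have intf: "integrable M (\<lambda>\<omega>. f (complex_of_real z + complex_of_real (\<xi> \<omega>)))" if "\<bar>z\<bar> \<le> R" for z
      by (rule int_shift[OF M xm xb fc]) (use that R0 in auto)
    have Gd: "G y - G x = integral\<^sup>L M (\<lambda>\<omega>. \<psi> (\<xi> \<omega>))"
      unfolding G_def \<psi>_def \<phi>_def using intf[of x] intf[of y] xy
      by (simp add: integral_diff[symmetric] integrable_Re)
    have intpsi: "integrable M (\<lambda>\<omega>. \<psi> (\<xi> \<omega>))"
      unfolding \<psi>_def \<phi>_def using intf[of x] intf[of y] xy
      by (auto intro!: integrable_diff integrable_Re)
    have bnd: "D * (y - x) \<le> \<bar>\<psi> (\<xi> \<omega>)\<bar>" if "\<omega> \<in> space M" for \<omega>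
      using psib xb[OF that] by (simp add: less_imp_le)
    from sign show ?thesis
    proof
      assume pos: "\<forall>\<omega>\<in>space M. \<psi> (\<xi> \<omega>) > 0"
      have "D * (y - x) = integral\<^sup>L M (\<lambda>_. D * (y - x))" by (simp add: prob_space)
      also have "\<dots> \<le> integral\<^sup>L M (\<lambda>\<omega>. \<psi> (\<xi> \<omega>))"
        by (rule integral_mono[OF _ intpsi]) (use bnd pos in \<open>auto intro: order_trans[OF bnd] simp: abs_of_pos\<close>)
      finally show ?thesis using Gd by simp
    next
      assume neg: "\<forall>\<omega>\<in>space M. \<psi> (\<xi> \<omega>) < 0"
      have "D * (y - x) = integral\<^sup>L M (\<lambda>_. D * (y - x))" by (simp add: prob_space)
      also have "\<dots> \<le> integral\<^sup>L M (\<lambda>\<omega>. - \<psi> (\<xi> \<omega>))"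
        by (rule integral_mono[OF _ integrable_minus[OF intpsi]]) (use bnd neg in \<open>auto intro: order_trans[OF bnd] simp: abs_of_neg\<close>)
      finally show ?thesis using Gd by simp
    qed
  qed
  show ?thesis
    unfolding G_def[symmetric] \<phi>_def[symmetric] D_def[symmetric]
    unfolding dcoef_def
  proof (rule cInf_greatest)
    show "{\<bar>G x - G y\<bar> / \<bar>x - y\<bar> |x y. x \<in> {- R..R} \<and> y \<in> {- R..R} \<and> x \<noteq> y} \<noteq> {}"
    proof -
      have "R \<in> {-R..R}" "-R \<in> {-R..R}" "R \<noteq> -R" using R by auto
      then show ?thesis by blast
    qed
    fix s assume "s \<in> {\<bar>G x - G y\<bar> / \<bar>x - y\<bar> |x y. x \<in> {- R..R} \<and> y \<in> {- R..R} \<and> x \<noteq> y}"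
    then obtain x y where s: "s = \<bar>G x - G y\<bar> / \<bar>x - y\<bar>" and xy: "x \<in> {-R..R}" "y \<in> {-R..R}" "x \<noteq> y"
      by blast
    show "D \<le> s"
    proof (cases "D > 0")
      case False
      have "0 \<le> s" unfolding s by simp
      then show ?thesis using False by linarith
    next
      case True
      show ?thesis
      proof (cases "x < y")
        case True
        with key[of x y] xy \<open>D > 0\<close> show ?thesis unfolding s
          by (simp add: field_simps abs_minus_commute)
      next
        case False
        with xy have "y < x" by auto
        with key[of y x] xy \<open>D > 0\<close> show ?thesis unfolding s
          by (simp add: field_simps abs_minus_commute)
      qed
    qed
  qed
qed

lemma hoeff_helper:
  fixes M :: "'a measure" and Z :: "nat \<Rightarrow> 'a \<Rightarrow> real" and a :: "nat \<Rightarrow> real"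
  assumes M: "prob_space M" and ind: "prob_space.indep_vars M (\<lambda>_. borel) Z {..<n}"
    and bd: "\<And>i \<omega>. i < n \<Longrightarrow> \<omega> \<in> space M \<Longrightarrow> \<bar>Z i \<omega>\<bar> \<le> B" and B: "B > 0"
    and mean: "\<And>i. i < n \<Longrightarrow> integral\<^sup>L M (Z i) = 0"
    and t: "t \<ge> 0"
  shows "measure M {\<omega> \<in> space M. \<bar>\<Sum>i<n. a i * Z i \<omega>\<bar> > t * sqrt (\<Sum>i<n. (a i)\<^sup>2)}
           \<le> 2 * exp (- t\<^sup>2 / (2 * B\<^sup>2))"
proof -
  interpret prob_space M by fact
  define S where "S = (\<Sum>i<n. (a i)\<^sup>2)"
  have S0: "S \<ge> 0" unfolding S_def by (intro sum_nonneg) auto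
  have rv: "random_variable borel (Z i)" if "i < n" for i
    using ind that unfolding indep_vars_def by auto
  show ?thesis
  proof (cases "S = 0")
    case True
    then have "\<forall>i\<in>{..<n}. (a i)\<^sup>2 = 0" unfolding S_def by (subst sum_nonneg_eq_0_iff[symmetric]) auto
    then have e: "{\<omega> \<in> space M. \<bar>\<Sum>i<n. a i * Z i \<omega>\<bar> > t * sqrt (\<Sum>i<n. (a i)\<^sup>2)} = {}" by simp
    show ?thesis unfolding e by simp
  next
    case False
    with S0 have Sp: "S > 0" by simp
    interpret H: Hoeffding_ineq M "{..<n}" "\<lambda>i \<omega>. a i * Z i \<omega>" "\<lambda>i. - (\<bar>a i\<bar> * B)" "\<lambda>i. \<bar>a i\<bar> * B" 0
    proof unfold_locales
      show "finite {..<n}" by simp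
      show "indep_vars (\<lambda>_. borel) (\<lambda>i \<omega>. a i * Z i \<omega>) {..<n}"
        by (rule indep_vars_compose2[OF ind]) auto
      fix i assume i: "i \<in> {..<n}"
      show "AE x in M. a i * Z i x \<in> {- (\<bar>a i\<bar> * B)..\<bar>a i\<bar> * B}"
      proof (rule AE_I2)
        fix x assume x: "x \<in> space M"
        have "\<bar>a i * Z i x\<bar> \<le> \<bar>a i\<bar> * B" using bd[of i x] i x by (simp add: abs_mult mult_left_mono)
        then show "a i * Z i x \<in> {- (\<bar>a i\<bar> * B)..\<bar>a i\<bar> * B}" by (simp add: abs_le_iff)
      qed
    next
      show "0 \<equiv> \<Sum>i<n. expectation (\<lambda>\<omega>. a i * Z i \<omega>)"
        using mean by simp
    qed
    have sum: "(\<Sum>i<n. (\<bar>a i\<bar> * B - - (\<bar>a i\<bar> * B))\<^sup>2) = 4 * B\<^sup>2 * S"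
      unfolding S_def sum_distrib_left by (intro sum.cong) (auto simp: power2_eq_square)
    have "measure M {\<omega> \<in> space M. \<bar>\<Sum>i<n. a i * Z i \<omega>\<bar> > t * sqrt S}
        \<le> measure M {\<omega> \<in> space M. \<bar>(\<Sum>i<n. a i * Z i \<omega>) - 0\<bar> \<ge> t * sqrt S}"
      by (intro finite_measure_mono) (auto intro!: borel_measurable_sum rv)
    also have "\<dots> \<le> 2 * exp (- 2 * (t * sqrt S)\<^sup>2 / (\<Sum>i<n. (\<bar>a i\<bar> * B - - (\<bar>a i\<bar> * B))\<^sup>2))"
      by (rule H.Hoeffding_ineq_abs_ge) (use t Sp B sum in auto)
    also have "- 2 * (t * sqrt S)\<^sup>2 / (\<Sum>i<n. (\<bar>a i\<bar> * B - - (\<bar>a i\<bar> * B))\<^sup>2) = - t\<^sup>2 / (2 * B\<^sup>2)"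
      unfolding sum using Sp B S0 by (simp add: power_mult_distrib field_simps)
    finally show ?thesis unfolding S_def .
  qed
qed


lemma indep_comb:
  fixes M :: "'a measure" and \<xi> \<epsilon> :: "nat \<Rightarrow> 'a \<Rightarrow> real" and \<Phi> :: "nat \<Rightarrow> real \<Rightarrow> real"
  assumes M: "prob_space M"
    and indep: "prob_space.indep_vars M (\<lambda>_. borel)
                  (\<lambda>k. case k of Inl i \<Rightarrow> \<xi> i | Inr i \<Rightarrow> \<epsilon> i)
                  (Inl ` {..<n} \<union> Inr ` {..<n})"
    and \<Phi>m: "\<And>i. \<Phi> i \<in> borel_measurable borel"
  shows "prob_space.indep_vars M (\<lambda>_. borel) (\<lambda>i \<omega>. \<Phi> i (\<xi> i \<omega>) + c * \<epsilon> i \<omega>) {..<n}"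
proof -
  interpret prob_space M by fact
  define Z where "Z = (\<lambda>k. case k of Inl i \<Rightarrow> \<xi> i | Inr i \<Rightarrow> \<epsilon> i)"
  define K where "K = (\<lambda>j::nat. {Inl j, Inr j :: nat + nat})"
  have r: "indep_vars (\<lambda>j. PiM (K j) (\<lambda>_. borel)) (\<lambda>j \<omega>. restrict (\<lambda>i. Z i \<omega>) (K j)) {..<n}"
    by (rule indep_vars_restrict[OF indep[folded Z_def]]) (auto simp: K_def disjoint_family_on_def)
  have c: "indep_vars (\<lambda>_. borel) (\<lambda>j \<omega>. (\<lambda>h. \<Phi> j (h (Inl j)) + c * h (Inr j)) (restrict (\<lambda>i. Z i \<omega>) (K j))) {..<n}"
  proof (rule indep_vars_compose2[OF r])
    fix j assume "j \<in> {..<n}"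
    have [measurable]: "(\<lambda>h. h (Inl j)) \<in> borel_measurable (PiM (K j) (\<lambda>_. borel))"
      by (rule measurable_component_singleton) (simp add: K_def)
    have [measurable]: "(\<lambda>h. h (Inr j)) \<in> borel_measurable (PiM (K j) (\<lambda>_. borel))"
      by (rule measurable_component_singleton) (simp add: K_def)
    note [measurable] = \<Phi>m
    show "(\<lambda>h. \<Phi> j (h (Inl j)) + c * h (Inr j)) \<in> borel_measurable (PiM (K j) (\<lambda>_. borel))"
      by measurable
  qed
  have "indep_vars (\<lambda>_. borel) (\<lambda>j \<omega>. (\<lambda>h. \<Phi> j (h (Inl j)) + c * h (Inr j)) (restrict (\<lambda>i. Z i \<omega>) (K j))) {..<n}
      \<longleftrightarrow> indep_vars (\<lambda>_. borel) (\<lambda>i \<omega>. \<Phi> i (\<xi> i \<omega>) + c * \<epsilon> i \<omega>) {..<n}"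
    by (rule indep_vars_cong) (auto simp: K_def Z_def fun_eq_iff)
  with c show ?thesis by simp
qed

theorem proposition3p1:
  fixes M :: "'a measure"
    and n p :: nat
    and X :: "nat \<Rightarrow> nat \<Rightarrow> real"
    and \<beta> :: "nat \<Rightarrow> real"
    and R r R0 :: real
    and \<xi> \<epsilon> :: "nat \<Rightarrow> 'a \<Rightarrow> real"
    and f :: "complex \<Rightarrow> complex"
  assumes M: "prob_space M"
    and n_pos: "0 < n"
    and R_pos: "0 < R"
    and beta: "\<And>i. i < n \<Longrightarrow> \<bar>\<Sum>j<p. X i j * \<beta> j\<bar> \<le> R"
    and xi_meas: "\<And>i. i < n \<Longrightarrow> \<xi> i \<in> borel_measurable M"
    and eps_meas: "\<And>i. i < n \<Longrightarrow> \<epsilon> i \<in> borel_measurable M"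
    and indep: "prob_space.indep_vars M (\<lambda>_. borel)
                  (\<lambda>k. case k of Inl i \<Rightarrow> \<xi> i | Inr i \<Rightarrow> \<epsilon> i)
                  (Inl ` {..<n} \<union> Inr ` {..<n})"
    and xi_mean: "\<And>i. i < n \<Longrightarrow> integrable M (\<xi> i) \<and> integral\<^sup>L M (\<xi> i) = 0"
    and eps_mean: "\<And>i. i < n \<Longrightarrow> integrable M (\<epsilon> i) \<and> integral\<^sup>L M (\<epsilon> i) = 0"
    and xi_id: "\<And>i. i < n \<Longrightarrow> distr M borel (\<xi> i) = distr M borel (\<xi> 0)"
    and r_pos: "0 < r"
    and xi_bdd: "\<And>i \<omega>. i < n \<Longrightarrow> \<omega> \<in> space M \<Longrightarrow> \<bar>\<xi> i \<omega>\<bar> < r"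
    and R0: "R0 > R + r"
    and f_cont: "continuous_on (cball 0 R0) f"
    and f_holo: "f holomorphic_on ball 0 R0"
    and f_real: "\<And>x. \<bar>x\<bar> \<le> R0 \<Longrightarrow> f (complex_of_real x) \<in> \<real>"
  defines "g \<equiv> (\<lambda>z. integral\<^sup>L M (\<lambda>\<omega>. f (z + complex_of_real (\<xi> 0 \<omega>))))"
    and "\<delta> \<equiv> (\<lambda>i \<omega>. Re (f (complex_of_real ((\<Sum>j<p. X i j * \<beta> j) + \<xi> i \<omega>)))
                   - Re (integral\<^sup>L M (\<lambda>\<omega>'. f (complex_of_real (\<Sum>j<p. X i j * \<beta> j) + complex_of_real (\<xi> 0 \<omega>')))) + \<epsilon> i \<omega>)"
  shows "g holomorphic_on ball 0 (R0 - r)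
     \<and> dcoef (\<lambda>x. Re (g (complex_of_real x))) {-R..R}
         \<ge> dcoef (\<lambda>x. Re (f (complex_of_real x))) {-R0..R0}
     \<and> ((\<exists>\<sigma> c. 0 < \<sigma> \<and> 0 < c \<and> (\<forall>t\<ge>0. \<forall>a::nat \<Rightarrow> real.
            measure M {\<omega> \<in> space M. \<bar>\<Sum>i<n. a i * \<epsilon> i \<omega>\<bar> > t * sqrt (\<Sum>i<n. (a i)\<^sup>2)}
              \<le> c * exp (- t\<^sup>2 / (2 * \<sigma>\<^sup>2))))
        \<longrightarrow> (\<exists>\<sigma>' c'. 0 < \<sigma>' \<and> 0 < c' \<and> (\<forall>t\<ge>0. \<forall>a::nat \<Rightarrow> real.
            measure M {\<omega> \<in> space M. \<bar>\<Sum>i<n. a i * \<delta> i \<omega>\<bar> > t * sqrt (\<Sum>i<n. (a i)\<^sup>2)}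
              \<le> c' * exp (- t\<^sup>2 / (2 * \<sigma>'\<^sup>2)))))
     \<and> ((\<exists>B. \<forall>i<n. \<forall>\<omega>\<in>space M. \<bar>\<epsilon> i \<omega>\<bar> \<le> B)
        \<longrightarrow> (\<exists>\<sigma>'. 0 < \<sigma>' \<and> (\<forall>t\<ge>0. \<forall>a::nat \<Rightarrow> real.
            measure M {\<omega> \<in> space M. \<bar>\<Sum>i<n. a i * \<delta> i \<omega>\<bar> > t * sqrt (\<Sum>i<n. (a i)\<^sup>2)}
              \<le> 2 * exp (- t\<^sup>2 / (2 * \<sigma>'\<^sup>2)))))"
proof -
  interpret P: prob_space M by (rule M)
  have xm0: "\<xi> 0 \<in> borel_measurable M" using xi_meas n_pos by blast
  have xb0: "\<And>\<omega>. \<omega> \<in> space M \<Longrightarrow> \<bar>\<xi> 0 \<omega>\<bar> < r" using xi_bdd n_pos by blast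
  have part1: "g holomorphic_on ball 0 (R0 - r)"
    unfolding g_def by (rule g_holo[OF M xm0 xb0 f_cont f_holo])
  have part2: "dcoef (\<lambda>x. Re (g (complex_of_real x))) {-R..R} \<ge> dcoef (\<lambda>x. Re (f (complex_of_real x))) {-R0..R0}"
    unfolding g_def by (rule dcoef_part[OF M xm0 xb0 f_cont R_pos R0])
  define xx where "xx i = (\<Sum>j<p. X i j * \<beta> j)" for i
  have xxb: "\<bar>xx i\<bar> \<le> R" if "i < n" for i using beta[OF that] by (simp add: xx_def)
  define F where "F = (\<lambda>w. if w \<in> cball 0 R0 then f w else 0)"
  have Fm: "F \<in> borel_measurable borel" unfolding F_def
    by (rule borel_measurable_continuous_on_if) (auto intro: f_cont continuous_on_const)
  obtain B0 where B0: "\<And>w. w \<in> cball 0 R0 \<Longrightarrow> norm (f w) \<le> B0"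
    using compact_imp_bounded[OF compact_continuous_image[OF f_cont compact_cball]]
    by (meson bounded_iff imageI)
  have B0p: "B0 \<ge> 0" using B0[of 0] R0 R_pos r_pos by (smt (verit) centre_in_cball norm_ge_zero)
  have FB: "\<bar>Re (F w)\<bar> \<le> B0" for w
    using B0[of w] B0p abs_Re_le_cmod[of "f w"] by (auto simp: F_def)
  define m where "m i = Re (integral\<^sup>L M (\<lambda>\<omega>'. f (complex_of_real (xx i) + complex_of_real (\<xi> 0 \<omega>'))))" for i
  define \<Phi> where "\<Phi> i s = Re (F (complex_of_real (xx i + s))) - m i" for i s
  have \<Phi>m: "\<Phi> i \<in> borel_measurable borel" for i
    unfolding \<Phi>_def using Fm by measurable
  have intf: "integrable M (\<lambda>\<omega>. f (complex_of_real (xx i) + complex_of_real (\<xi> 0 \<omega>)))" if "i < n" for i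
    by (rule int_shift[OF M xm0 xb0 f_cont]) (use xxb[OF that] R0 in auto)
  have Feq: "F (complex_of_real (xx i + s)) = f (complex_of_real (xx i) + complex_of_real s)"
    if "i < n" "\<bar>s\<bar> \<le> r" for i s
  proof -
    have "\<bar>xx i + s\<bar> \<le> R0" using xxb[OF that(1)] that(2) R0 by linarith
    then have "cmod (complex_of_real (xx i) + complex_of_real s) \<le> R0" by (metis norm_of_real of_real_add)
    then show ?thesis by (simp add: F_def)
  qed
  have intRF: "integrable M (\<lambda>\<omega>. Re (F (complex_of_real (xx i + \<xi> 0 \<omega>))))" if "i < n" for i
  proof (rule P.integrable_const_bound[where B=B0])
    show "AE \<omega> in M. norm (Re (F (complex_of_real (xx i + \<xi> 0 \<omega>)))) \<le> B0" using FB by simp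
    note [measurable] = Fm xm0
    show "(\<lambda>\<omega>. Re (F (complex_of_real (xx i + \<xi> 0 \<omega>)))) \<in> borel_measurable M" by measurable
  qed
  have mF: "m i = integral\<^sup>L M (\<lambda>\<omega>. Re (F (complex_of_real (xx i + \<xi> 0 \<omega>))))" if "i < n" for i
  proof -
    have "m i = integral\<^sup>L M (\<lambda>\<omega>. Re (f (complex_of_real (xx i) + complex_of_real (\<xi> 0 \<omega>))))"
      unfolding m_def using intf[OF that] by simp
    also have "\<dots> = integral\<^sup>L M (\<lambda>\<omega>. Re (F (complex_of_real (xx i + \<xi> 0 \<omega>))))"
      by (rule Bochner_Integration.integral_cong) (metis Feq[OF that] less_imp_le xb0)+
    finally show ?thesis .
  qed
  have mb: "\<bar>m i\<bar> \<le> B0" if "i < n" for i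
  proof -
    have "integral\<^sup>L M (\<lambda>\<omega>. Re (F (complex_of_real (xx i + \<xi> 0 \<omega>)))) \<le> B0"
      by (rule P.integral_le_const[OF intRF[OF that]]) (use FB in \<open>auto simp: abs_le_iff\<close>)
    moreover have "integral\<^sup>L M (\<lambda>\<omega>. - Re (F (complex_of_real (xx i + \<xi> 0 \<omega>)))) \<le> B0"
      by (rule P.integral_le_const[OF integrable_minus[OF intRF[OF that]]]) (use FB in \<open>auto simp: abs_le_iff\<close>)
    ultimately show ?thesis using mF[OF that] by auto
  qed
  have \<Phi>b: "\<bar>\<Phi> i s\<bar> \<le> 2 * B0" if "i < n" for i s
    using FB[of "complex_of_real (xx i + s)"] mb[OF that] unfolding \<Phi>_def by linarith
  have umeas: "(\<lambda>\<omega>. \<Phi> i (\<xi> i \<omega>)) \<in> borel_measurable M" if "i < n" for i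
    using measurable_compose[OF xi_meas[OF that] \<Phi>m] by (simp add: o_def)
  have uint: "integrable M (\<lambda>\<omega>. \<Phi> i (\<xi> i \<omega>))" if "i < n" for i
    by (rule P.integrable_const_bound[where B="2*B0"]) (use \<Phi>b[OF that] umeas[OF that] in auto)
  have umean: "integral\<^sup>L M (\<lambda>\<omega>. \<Phi> i (\<xi> i \<omega>)) = 0" if "i < n" for i
  proof -
    have "integral\<^sup>L M (\<lambda>\<omega>. \<Phi> i (\<xi> i \<omega>)) = integral\<^sup>L (distr M borel (\<xi> i)) (\<Phi> i)"
      by (rule integral_distr[symmetric]) (use xi_meas[OF that] \<Phi>m in auto)
    also have "\<dots> = integral\<^sup>L (distr M borel (\<xi> 0)) (\<Phi> i)" using xi_id[OF that] by simp
    also have "\<dots> = integral\<^sup>L M (\<lambda>\<omega>. \<Phi> i (\<xi> 0 \<omega>))"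
      by (rule integral_distr) (use xm0 \<Phi>m in auto)
    also have "\<dots> = integral\<^sup>L M (\<lambda>\<omega>. Re (F (complex_of_real (xx i + \<xi> 0 \<omega>)))) - m i"
      unfolding \<Phi>_def using intRF[OF that] by (simp add: integral_diff P.prob_space)
    also have "\<dots> = 0" using mF[OF that] by simp
    finally show ?thesis .
  qed
  have \<delta>eq: "\<delta> i \<omega> = \<Phi> i (\<xi> i \<omega>) + \<epsilon> i \<omega>" if "i < n" "\<omega> \<in> space M" for i \<omega>
  proof -
    have "F (complex_of_real (xx i + \<xi> i \<omega>)) = f (complex_of_real (xx i + \<xi> i \<omega>))"
    proof -
      have "\<bar>xx i + \<xi> i \<omega>\<bar> \<le> R0" using xxb[OF that(1)] xi_bdd[OF that] R0 by linarith
      then have "cmod (complex_of_real (xx i) + complex_of_real (\<xi> i \<omega>)) \<le> R0" by (metis norm_of_real of_real_add)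
      then show ?thesis by (simp add: F_def)
    qed
    then show ?thesis unfolding \<delta>_def \<Phi>_def m_def xx_def by simp
  qed
  have ind: "P.indep_vars (\<lambda>_. borel) (\<lambda>i \<omega>. \<Phi> i (\<xi> i \<omega>) + c * \<epsilon> i \<omega>) {..<n}" for c
    by (rule indep_comb[OF M indep \<Phi>m])
  have part4: "(\<exists>B. \<forall>i<n. \<forall>\<omega>\<in>space M. \<bar>\<epsilon> i \<omega>\<bar> \<le> B)
        \<longrightarrow> (\<exists>\<sigma>'. 0 < \<sigma>' \<and> (\<forall>t\<ge>0. \<forall>a::nat \<Rightarrow> real.
            measure M {\<omega> \<in> space M. \<bar>\<Sum>i<n. a i * \<delta> i \<omega>\<bar> > t * sqrt (\<Sum>i<n. (a i)\<^sup>2)}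
              \<le> 2 * exp (- t\<^sup>2 / (2 * \<sigma>'\<^sup>2))))"
  proof
    assume "\<exists>B. \<forall>i<n. \<forall>\<omega>\<in>space M. \<bar>\<epsilon> i \<omega>\<bar> \<le> B"
    then obtain B where Bb: "\<And>i \<omega>. i < n \<Longrightarrow> \<omega> \<in> space M \<Longrightarrow> \<bar>\<epsilon> i \<omega>\<bar> \<le> B" by blast
    define Bd where "Bd = 2 * B0 + \<bar>B\<bar> + 1"
    have Bd: "Bd > 0" unfolding Bd_def using B0p by simp
    show "\<exists>\<sigma>'. 0 < \<sigma>' \<and> (\<forall>t\<ge>0. \<forall>a::nat \<Rightarrow> real.
            measure M {\<omega> \<in> space M. \<bar>\<Sum>i<n. a i * \<delta> i \<omega>\<bar> > t * sqrt (\<Sum>i<n. (a i)\<^sup>2)}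
              \<le> 2 * exp (- t\<^sup>2 / (2 * \<sigma>'\<^sup>2)))"
    proof (intro exI[of _ Bd] conjI allI impI Bd)
      fix t :: real and a :: "nat \<Rightarrow> real" assume t: "t \<ge> 0"
      have bd: "\<bar>\<Phi> i (\<xi> i \<omega>) + 1 * \<epsilon> i \<omega>\<bar> \<le> Bd" if "i < n" "\<omega> \<in> space M" for i \<omega>
        using \<Phi>b[OF that(1), of "\<xi> i \<omega>"] Bb[OF that] unfolding Bd_def by linarith
      have mean: "integral\<^sup>L M (\<lambda>\<omega>. \<Phi> i (\<xi> i \<omega>) + 1 * \<epsilon> i \<omega>) = 0" if "i < n" for i
        using uint[OF that] umean[OF that] eps_mean[OF that] by simp
      have eq: "{\<omega> \<in> space M. \<bar>\<Sum>i<n. a i * \<delta> i \<omega>\<bar> > t * sqrt (\<Sum>i<n. (a i)\<^sup>2)}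
          = {\<omega> \<in> space M. \<bar>\<Sum>i<n. a i * (\<Phi> i (\<xi> i \<omega>) + 1 * \<epsilon> i \<omega>)\<bar> > t * sqrt (\<Sum>i<n. (a i)\<^sup>2)}"
      proof -
        have sumeq: "(\<Sum>i<n. a i * \<delta> i \<omega>) = (\<Sum>i<n. a i * (\<Phi> i (\<xi> i \<omega>) + 1 * \<epsilon> i \<omega>))"
          if "\<omega> \<in> space M" for \<omega> using \<delta>eq[OF _ that] by (intro sum.cong) auto
        show ?thesis
        proof (rule Collect_cong)
          fix \<omega> show "(\<omega> \<in> space M \<and> \<bar>\<Sum>i<n. a i * \<delta> i \<omega>\<bar> > t * sqrt (\<Sum>i<n. (a i)\<^sup>2)) =
             (\<omega> \<in> space M \<and> \<bar>\<Sum>i<n. a i * (\<Phi> i (\<xi> i \<omega>) + 1 * \<epsilon> i \<omega>)\<bar> > t * sqrt (\<Sum>i<n. (a i)\<^sup>2))"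
            by (cases "\<omega> \<in> space M") (simp_all only: sumeq simp_thms)
        qed
      qed
      show "measure M {\<omega> \<in> space M. \<bar>\<Sum>i<n. a i * \<delta> i \<omega>\<bar> > t * sqrt (\<Sum>i<n. (a i)\<^sup>2)}
              \<le> 2 * exp (- t\<^sup>2 / (2 * Bd\<^sup>2))"
        unfolding eq by (rule hoeff_helper[OF M ind[of 1] bd Bd mean t])
    qed
  qed
  have part3: "(\<exists>\<sigma> c. 0 < \<sigma> \<and> 0 < c \<and> (\<forall>t\<ge>0. \<forall>a::nat \<Rightarrow> real.
            measure M {\<omega> \<in> space M. \<bar>\<Sum>i<n. a i * \<epsilon> i \<omega>\<bar> > t * sqrt (\<Sum>i<n. (a i)\<^sup>2)}
              \<le> c * exp (- t\<^sup>2 / (2 * \<sigma>\<^sup>2))))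
        \<longrightarrow> (\<exists>\<sigma>' c'. 0 < \<sigma>' \<and> 0 < c' \<and> (\<forall>t\<ge>0. \<forall>a::nat \<Rightarrow> real.
            measure M {\<omega> \<in> space M. \<bar>\<Sum>i<n. a i * \<delta> i \<omega>\<bar> > t * sqrt (\<Sum>i<n. (a i)\<^sup>2)}
              \<le> c' * exp (- t\<^sup>2 / (2 * \<sigma>'\<^sup>2))))"
  proof
    assume "\<exists>\<sigma> c. 0 < \<sigma> \<and> 0 < c \<and> (\<forall>t\<ge>0. \<forall>a::nat \<Rightarrow> real.
            measure M {\<omega> \<in> space M. \<bar>\<Sum>i<n. a i * \<epsilon> i \<omega>\<bar> > t * sqrt (\<Sum>i<n. (a i)\<^sup>2)}
              \<le> c * exp (- t\<^sup>2 / (2 * \<sigma>\<^sup>2)))"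
    then obtain \<sigma> c where \<sigma>: "0 < \<sigma>" and c: "0 < c" and hyp: "\<And>t a. t \<ge> 0 \<Longrightarrow>
            measure M {\<omega> \<in> space M. \<bar>\<Sum>i<n. a i * \<epsilon> i \<omega>\<bar> > t * sqrt (\<Sum>i<n. (a i)\<^sup>2)}
              \<le> c * exp (- t\<^sup>2 / (2 * \<sigma>\<^sup>2))" by blast
    define Bu where "Bu = 2 * B0 + 1"
    have Bu: "Bu > 0" unfolding Bu_def using B0p by simp
    define Mx where "Mx = max Bu \<sigma>"
    have Mx: "Mx > 0" "Bu \<le> Mx" "\<sigma> \<le> Mx" unfolding Mx_def using Bu by auto
    show "\<exists>\<sigma>' c'. 0 < \<sigma>' \<and> 0 < c' \<and> (\<forall>t\<ge>0. \<forall>a::nat \<Rightarrow> real.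
            measure M {\<omega> \<in> space M. \<bar>\<Sum>i<n. a i * \<delta> i \<omega>\<bar> > t * sqrt (\<Sum>i<n. (a i)\<^sup>2)}
              \<le> c' * exp (- t\<^sup>2 / (2 * \<sigma>'\<^sup>2)))"
    proof (rule exI[of _ "2 * Mx"], rule exI[of _ "2 + c"], intro conjI allI impI)
      show "0 < 2 * Mx" "0 < 2 + c" using Mx c by auto
      fix t :: real and a :: "nat \<Rightarrow> real" assume t: "t \<ge> 0"
      define S where "S = sqrt (\<Sum>i<n. (a i)\<^sup>2)"
      have S: "S \<ge> 0" unfolding S_def by (intro real_sqrt_ge_zero sum_nonneg) auto
      have bd: "\<bar>\<Phi> i (\<xi> i \<omega>) + 0 * \<epsilon> i \<omega>\<bar> \<le> Bu" if "i < n" "\<omega> \<in> space M" for i \<omega>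
        using \<Phi>b[OF that(1), of "\<xi> i \<omega>"] unfolding Bu_def by simp
      have mean: "integral\<^sup>L M (\<lambda>\<omega>. \<Phi> i (\<xi> i \<omega>) + 0 * \<epsilon> i \<omega>) = 0" if "i < n" for i
        using umean[OF that] by simp
      have t2: "t / 2 \<ge> 0" using t by simp
      have hu: "measure M {\<omega> \<in> space M. \<bar>\<Sum>i<n. a i * (\<Phi> i (\<xi> i \<omega>) + 0 * \<epsilon> i \<omega>)\<bar> > t / 2 * S}
           \<le> 2 * exp (- (t / 2)\<^sup>2 / (2 * Bu\<^sup>2))"
        unfolding S_def by (rule hoeff_helper[OF M ind[of 0] bd Bu mean t2])
      have he: "measure M {\<omega> \<in> space M. \<bar>\<Sum>i<n. a i * \<epsilon> i \<omega>\<bar> > t / 2 * S}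
           \<le> c * exp (- (t / 2)\<^sup>2 / (2 * \<sigma>\<^sup>2))"
        unfolding S_def by (rule hyp[OF t2])
      have sm_u: "(\<lambda>\<omega>. \<Sum>i<n. a i * (\<Phi> i (\<xi> i \<omega>) + 0 * \<epsilon> i \<omega>)) \<in> borel_measurable M"
        by (intro borel_measurable_sum) (use umeas in simp)
      have sm_e: "(\<lambda>\<omega>. \<Sum>i<n. a i * \<epsilon> i \<omega>) \<in> borel_measurable M"
        by (intro borel_measurable_sum borel_measurable_times borel_measurable_const) (use eps_meas in simp)
      note [measurable] = sm_u sm_e
      define A where "A = {\<omega> \<in> space M. \<bar>\<Sum>i<n. a i * (\<Phi> i (\<xi> i \<omega>) + 0 * \<epsilon> i \<omega>)\<bar> > t / 2 * S}"
      define E where "E = {\<omega> \<in> space M. \<bar>\<Sum>i<n. a i * \<epsilon> i \<omega>\<bar> > t / 2 * S}"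
      have Am: "A \<in> sets M" unfolding A_def by measurable
      have Em: "E \<in> sets M" unfolding E_def by measurable
      have sub: "{\<omega> \<in> space M. \<bar>\<Sum>i<n. a i * \<delta> i \<omega>\<bar> > t * S} \<subseteq> A \<union> E"
      proof
        fix \<omega> assume w: "\<omega> \<in> {\<omega> \<in> space M. \<bar>\<Sum>i<n. a i * \<delta> i \<omega>\<bar> > t * S}"
        then have ws: "\<omega> \<in> space M" by simp
        have "(\<Sum>i<n. a i * \<delta> i \<omega>) = (\<Sum>i<n. a i * (\<Phi> i (\<xi> i \<omega>) + 0 * \<epsilon> i \<omega>)) + (\<Sum>i<n. a i * \<epsilon> i \<omega>)"
          using \<delta>eq[OF _ ws] by (simp add: sum.distrib[symmetric] algebra_simps)
        then have se: "\<bar>\<Sum>i<n. a i * \<delta> i \<omega>\<bar> \<le> \<bar>\<Sum>i<n. a i * (\<Phi> i (\<xi> i \<omega>) + 0 * \<epsilon> i \<omega>)\<bar> + \<bar>\<Sum>i<n. a i * \<epsilon> i \<omega>\<bar>"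
          by (simp only: abs_triangle_ineq)
        have "t * S < \<bar>\<Sum>i<n. a i * \<delta> i \<omega>\<bar>" using w by simp
        with se have "t * S < \<bar>\<Sum>i<n. a i * (\<Phi> i (\<xi> i \<omega>) + 0 * \<epsilon> i \<omega>)\<bar> + \<bar>\<Sum>i<n. a i * \<epsilon> i \<omega>\<bar>"
          by linarith
        then show "\<omega> \<in> A \<union> E" unfolding A_def E_def using ws by (auto simp: field_simps)
      qed
      have "measure M {\<omega> \<in> space M. \<bar>\<Sum>i<n. a i * \<delta> i \<omega>\<bar> > t * S} \<le> measure M (A \<union> E)"
        by (rule P.finite_measure_mono[OF sub]) (use Am Em in auto)
      also have "\<dots> \<le> measure M A + measure M E" by (rule measure_Un_le[OF Am Em])
      also have "\<dots> \<le> 2 * exp (- (t / 2)\<^sup>2 / (2 * Bu\<^sup>2)) + c * exp (- (t / 2)\<^sup>2 / (2 * \<sigma>\<^sup>2))"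
        using hu he unfolding A_def E_def by linarith
      also have "\<dots> \<le> 2 * exp (- t\<^sup>2 / (2 * (2 * Mx)\<^sup>2)) + c * exp (- t\<^sup>2 / (2 * (2 * Mx)\<^sup>2))"
      proof -
        have k: "- (t / 2)\<^sup>2 / (2 * q\<^sup>2) \<le> - t\<^sup>2 / (2 * (2 * Mx)\<^sup>2)" if "0 < q" "q \<le> Mx" for q
        proof -
          have "t\<^sup>2 / (8 * Mx\<^sup>2) \<le> t\<^sup>2 / (8 * q\<^sup>2)"
            by (rule divide_left_mono) (use that in \<open>auto intro: power_mono\<close>)
          then show ?thesis by (simp add: power_divide power_mult_distrib)
        qed
        show ?thesis
          using k[OF Bu Mx(2)] k[OF \<sigma> Mx(3)] c
          by (intro add_mono mult_left_mono) auto
      qed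
      also have "\<dots> = (2 + c) * exp (- t\<^sup>2 / (2 * (2 * Mx)\<^sup>2))" by (simp add: algebra_simps)
      finally show "measure M {\<omega> \<in> space M. \<bar>\<Sum>i<n. a i * \<delta> i \<omega>\<bar> > t * sqrt (\<Sum>i<n. (a i)\<^sup>2)}
              \<le> (2 + c) * exp (- t\<^sup>2 / (2 * (2 * Mx)\<^sup>2))" unfolding S_def .
    qed
  qed
  show ?thesis using part1 part2 part3 part4 by blast
qed

end
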